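(* Let $q$ be a positive integer, $Z>0$, $\gamma:=(6\pi^2/q)^{2/3}$. For non-negative $\tilde\tau\in L^{3/2}(\mathbb{R}^3,(1+\xi^2)\mathrm{d}\xi)$ define $\mathcal{E}_s(\tilde\tau):=\mathcal{E}_{\mathrm{mTF}}(\tilde\tau^{3/2})$. Then $\mathcal{E}_s$ is strictly convex on this (convex) set of functions.
   Context: $\mathcal{E}_{\mathrm{mTF}}(\tau)=\int_{\mathbb{R}^3}\xi^2\tau(\xi)\,\mathrm{d}\xi-\tfrac32\gamma^{-1/2}Z\int_{\mathbb{R}^3}\tau(\xi)^{2/3}\,\mathrm{d}\xi+\tfrac34\gamma^{-1/2}\iint\big(\tau_<(\xi,\xi')\tau_>(\xi,\xi')^{2/3}-\tfrac15\tau_<(\xi,\xi')^{5/3}\big)\mathrm{d}\xi\,\mathrm{d}\xi'$, with $\tau_<=\min\{\tau(\xi),\tau(\xi')\}$, $\tau_>=\max\{\tau(\xi),\tau(\xi')\}$. $L^{3/2}(\mathbb{R}^3,(1+\xi^2)\mathrm{d}\xi)$ denotes functions with $\int(1+\xi^2)|\tilde\tau|^{3/2}\,\mathrm{d}\xi<\infty$. *)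

theory Defs
  imports "HOL-Analysis.Analysis"
begin

definition gamma_q :: "nat \<Rightarrow> real" where
  "gamma_q q = (6 * pi^2 / real q) powr (2/3)"

text \<open>The modified Thomas-Fermi functional, with tau_< = min, tau_> = max.\<close>
definition E_mTF :: "nat \<Rightarrow> real \<Rightarrow> (real^3 \<Rightarrow> real) \<Rightarrow> real" where
  "E_mTF q Z \<tau> =
     (\<integral>\<xi>. (norm \<xi>)^2 * \<tau> \<xi> \<partial>lborel)
     - 3/2 * gamma_q q powr (-1/2) * Z * (\<integral>\<xi>. \<tau> \<xi> powr (2/3) \<partial>lborel)
     + 3/4 * gamma_q q powr (-1/2) *
       (\<integral>p. (min (\<tau> (fst p)) (\<tau> (snd p)) * max (\<tau> (fst p)) (\<tau> (snd p)) powr (2/3)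
              - 1/5 * min (\<tau> (fst p)) (\<tau> (snd p)) powr (5/3)) \<partial>(lborel \<Otimes>\<^sub>M lborel))"

definition E_s :: "nat \<Rightarrow> real \<Rightarrow> (real^3 \<Rightarrow> real) \<Rightarrow> real" where
  "E_s q Z t = E_mTF q Z (\<lambda>\<xi>. t \<xi> powr (3/2))"

text \<open>Non-negative elements of L^{3/2}(R^3, (1+xi^2) dxi) (non-negative representatives).\<close>
definition admissible :: "(real^3 \<Rightarrow> real) \<Rightarrow> bool" where
  "admissible t \<longleftrightarrow> t \<in> borel_measurable lborel \<and> (\<forall>\<xi>. 0 \<le> t \<xi>) \<and>
     integrable lborel (\<lambda>\<xi>. (1 + (norm \<xi>)^2) * \<bar>t \<xi>\<bar> powr (3/2))"

end

theory Submission
  imports Defs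
begin


lemma powr32: "(x::real) \<ge> 0 \<Longrightarrow> x powr (3/2) = x * sqrt x"
proof -
  assume x: "x \<ge> 0"
  show ?thesis
  proof (cases "x = 0")
    case False
    have "x powr (3/2) = x powr (1 + 1/2)" by simp
    also have "\<dots> = x powr 1 * x powr (1/2)" by (rule powr_add)
    also have "\<dots> = x * sqrt x" using x False by (simp add: powr_half_sqrt)
    finally show ?thesis .
  qed simp
qed

lemma tangent_aux:
  fixes u v :: real assumes "u \<ge> 0" "v \<ge> 0"
  shows "u^3 - v^3 - 3/2 * v * (u^2 - v^2) = (u - v)^2 * (u + v/2)"
  by (simp add: field_simps power2_eq_square power3_eq_cube)

lemma tangent32:
  fixes a m :: real assumes a: "a \<ge> 0" and m: "m \<ge> 0"
  shows "m * sqrt m + 3/2 * sqrt m * (a - m) \<le> a * sqrt a"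
    and "a \<noteq> m \<Longrightarrow> m > 0 \<Longrightarrow> m * sqrt m + 3/2 * sqrt m * (a - m) < a * sqrt a"
proof -
  define u where "u = sqrt a"
  define v where "v = sqrt m"
  have u: "u \<ge> 0" "a = u^2" using a by (auto simp: u_def)
  have v: "v \<ge> 0" "m = v^2" using m by (auto simp: v_def)
  have e: "a * sqrt a - (m * sqrt m + 3/2 * sqrt m * (a - m)) = (u - v)^2 * (u + v/2)"
  proof -
    have "sqrt a = u" "sqrt m = v" by (simp_all add: u_def v_def)
    then show ?thesis using tangent_aux[OF u(1) v(1)] u(2) v(2)
      by (simp add: power2_eq_square power3_eq_cube)
  qed
  have "(u - v)^2 * (u + v/2) \<ge> 0" using u v by simp
  then show "m * sqrt m + 3/2 * sqrt m * (a - m) \<le> a * sqrt a" using e by linarith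
  assume "a \<noteq> m" "m > 0"
  then have "u \<noteq> v" "v > 0" using u v by auto
  then have "(u - v)^2 * (u + v/2) > 0" using u by (intro mult_pos_pos) auto
  then show "m * sqrt m + 3/2 * sqrt m * (a - m) < a * sqrt a" using e by linarith
qed

lemma conv32:
  fixes a b s :: real assumes a: "a \<ge> 0" and b: "b \<ge> 0" and s: "0 < s" "s < 1"
  shows "(s*a + (1-s)*b) * sqrt (s*a + (1-s)*b) \<le> s * (a * sqrt a) + (1-s) * (b * sqrt b)"
    and "a \<noteq> b \<Longrightarrow> (s*a + (1-s)*b) * sqrt (s*a + (1-s)*b) < s * (a * sqrt a) + (1-s) * (b * sqrt b)"
proof -
  define m where "m = s*a + (1-s)*b"
  have m0: "m \<ge> 0" using a b s by (simp add: m_def)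
  have lin: "s * (a - m) + (1-s) * (b - m) = 0" by (simp add: m_def algebra_simps)
  have ta: "m * sqrt m + 3/2 * sqrt m * (a - m) \<le> a * sqrt a" by (rule tangent32(1)[OF a m0])
  have tb: "m * sqrt m + 3/2 * sqrt m * (b - m) \<le> b * sqrt b" by (rule tangent32(1)[OF b m0])
  have key: "s * (m * sqrt m + 3/2 * sqrt m * (a - m)) + (1-s) * (m * sqrt m + 3/2 * sqrt m * (b - m)) = m * sqrt m"
  proof -
    have "s * (m * sqrt m + 3/2 * sqrt m * (a - m)) + (1-s) * (m * sqrt m + 3/2 * sqrt m * (b - m))
       = m * sqrt m + 3/2 * sqrt m * (s * (a - m) + (1-s) * (b - m))" by (simp add: field_simps)
    then show ?thesis using lin by simp
  qed
  have "s * (m * sqrt m + 3/2 * sqrt m * (a - m)) \<le> s * (a * sqrt a)" using ta s by simp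
  moreover have "(1-s) * (m * sqrt m + 3/2 * sqrt m * (b - m)) \<le> (1-s) * (b * sqrt b)" using tb s by simp
  ultimately show "(s*a + (1-s)*b) * sqrt (s*a + (1-s)*b) \<le> s * (a * sqrt a) + (1-s) * (b * sqrt b)"
    using key unfolding m_def by linarith
  assume ab: "a \<noteq> b"
  have mpos: "m > 0"
  proof -
    have "a > 0 \<or> b > 0" using a b ab by auto
    then show ?thesis using a b s unfolding m_def
      by (auto intro: add_pos_nonneg add_nonneg_pos)
  qed
  have "a \<noteq> m"
  proof
    assume "a = m" then have "(1-s) * (b - a) = 0" unfolding m_def by (simp add: algebra_simps)
    then show False using ab s by simp
  qed
  then have "m * sqrt m + 3/2 * sqrt m * (a - m) < a * sqrt a" by (rule tangent32(2)[OF a m0 _ mpos])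
  then have "s * (m * sqrt m + 3/2 * sqrt m * (a - m)) < s * (a * sqrt a)" using s by simp
  moreover have "(1-s) * (m * sqrt m + 3/2 * sqrt m * (b - m)) \<le> (1-s) * (b * sqrt b)" using tb s by simp
  ultimately show "(s*a + (1-s)*b) * sqrt (s*a + (1-s)*b) < s * (a * sqrt a) + (1-s) * (b * sqrt b)"
    using key unfolding m_def by linarith
qed




lemma emeasure_ball3:
  assumes "r \<ge> 0"
  shows "emeasure lborel (ball (0::real^3) r) = ennreal (r^3 * measure lborel (ball (0::real^3) 1))"
proof -
  have "emeasure lborel (ball (0::real^3) r) = ennreal (measure lborel (ball (0::real^3) r))"
    using emeasure_lborel_ball_finite[of "0::real^3" r] by (intro emeasure_eq_ennreal_measure) auto
  also have "measure lborel (ball (0::real^3) r) = r^3 * measure lborel (ball (0::real^3) 1)"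
    using content_ball_conv_unit_ball[OF assms, of "0::real^3"] by simp
  finally show ?thesis by simp
qed

lemma w_pointwise:
  fixes \<xi> :: "real^3"
  shows "\<exists>k. norm \<xi> < 2^k \<and> 1 / (1 + (norm \<xi>)^2)^2 \<le> 16 / 16^k"
proof -
  obtain n where n: "norm \<xi> < 2^n" using real_arch_pow[of 2 "norm \<xi>"] by auto
  define k where "k = (LEAST k. norm \<xi> < (2::real)^k)"
  have k: "norm \<xi> < 2^k" unfolding k_def by (rule LeastI[of _ n]) (rule n)
  have "1 / (1 + (norm \<xi>)^2)^2 \<le> 16 / 16^k"
  proof (cases k)
    case 0
    have "1 / (1 + (norm \<xi>)^2)^2 \<le> 1"
      by (simp add: divide_le_eq_1 one_le_power)
    then show ?thesis using 0 by simp
  next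
    case (Suc j)
    have "\<not> norm \<xi> < 2^j"
    proof
      assume "norm \<xi> < 2^j"
      then have "k \<le> j" unfolding k_def by (rule Least_le)
      then show False using Suc by simp
    qed
    then have "2^j \<le> norm \<xi>" by simp
    then have "(2^j)^2 \<le> (norm \<xi>)^2" by (intro power_mono) auto
    moreover have "((2::real)^j)^2 = 4^j"
      by (simp add: power2_eq_square power_mult_distrib[symmetric])
    ultimately have "(4::real)^j \<le> (norm \<xi>)^2" by simp
    then have h: "(4::real)^j \<le> 1 + (norm \<xi>)^2" by simp
    then have "((4::real)^j)^2 \<le> (1 + (norm \<xi>)^2)^2" by (intro power_mono) auto
    moreover have "((4::real)^j)^2 = 16^j"
      by (simp add: power2_eq_square power_mult_distrib[symmetric])
    ultimately have "(16::real)^j \<le> (1 + (norm \<xi>)^2)^2" by simp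
    then have "1 / (1 + (norm \<xi>)^2)^2 \<le> 1 / 16^j"
      using add_pos_nonneg[OF zero_less_one zero_le_power2[of "norm \<xi>"]]
      by (intro divide_left_mono) auto
    then show ?thesis using Suc by simp
  qed
  then show ?thesis using k by blast
qed

lemma w_integrable: "integrable lborel (\<lambda>\<xi>::real^3. 1 / (1 + (norm \<xi>)^2)^2)"
proof -
  define V where "V = measure lborel (ball (0::real^3) 1)"
  have V: "V \<ge> 0" by (simp add: V_def)
  define g where "g = (\<lambda>k (\<xi>::real^3). ennreal (16 / 16^k) * indicator (ball 0 (2^k)) \<xi>)"
  have le: "ennreal (1 / (1 + (norm \<xi>)^2)^2) \<le> (\<Sum>k. g k \<xi>)" for \<xi> :: "real^3"
  proof -
    obtain k where k: "norm \<xi> < 2^k" "1 / (1 + (norm \<xi>)^2)^2 \<le> 16 / 16^k"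
      using w_pointwise by blast
    have "ennreal (1 / (1 + (norm \<xi>)^2)^2) \<le> g k \<xi>"
      using k by (simp add: g_def indicator_def)
    also have "\<dots> = sum (\<lambda>k. g k \<xi>) {k}" by simp
    also have "\<dots> \<le> (\<Sum>k. g k \<xi>)" by (intro sum_le_suminf summableI) auto
    finally show ?thesis .
  qed
  have "(\<integral>\<^sup>+\<xi>. ennreal (1 / (1 + (norm \<xi>)^2)^2) \<partial>(lborel::(real^3) measure)) \<le> (\<integral>\<^sup>+\<xi>. (\<Sum>k. g k \<xi>) \<partial>lborel)"
    by (intro nn_integral_mono le)
  also have "\<dots> = (\<Sum>k. integral\<^sup>N lborel (g k))"
    unfolding g_def by (intro nn_integral_suminf borel_measurable_times_ennreal borel_measurable_const borel_measurable_indicator) simp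
  also have "\<dots> = (\<Sum>k. ennreal (16 * V * (1/2)^k))"
  proof (intro suminf_cong)
    fix k :: nat
    have "integral\<^sup>N lborel (g k) = ennreal (16 / 16^k) * emeasure lborel (ball (0::real^3) (2^k))"
      by (simp add: g_def nn_integral_cmult_indicator)
    also have "\<dots> = ennreal (16 / 16^k) * ennreal ((2^k)^3 * V)"
      by (simp add: emeasure_ball3 V_def)
    also have "\<dots> = ennreal (16 / 16^k * ((2^k)^3 * V))"
      by (rule ennreal_mult[symmetric]) (use V in auto)
    also have "16 / 16^k * ((2^k)^3 * V) = 16 * V * (1/2::real)^k"
    proof -
      have e1: "((2::real)^k)^3 = 8^k" by (simp add: power3_eq_cube power_mult_distrib[symmetric])
      have e2: "(16::real)^k = 8^k * 2^k" by (simp add: power_mult_distrib[symmetric])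
      have e3: "(1/2::real)^k = 1/2^k" by (simp add: power_divide)
      show ?thesis unfolding e1 e2 e3 by (simp add: field_simps)
    qed
    finally show "integral\<^sup>N lborel (g k) = ennreal (16 * V * (1/2)^k)" .
  qed
  also have "\<dots> = ennreal (\<Sum>k. 16 * V * (1/2)^k)"
    using V by (intro suminf_ennreal2) (auto intro: summable_mult summable_geometric)
  also have "\<dots> < \<infinity>" by simp
  finally show ?thesis
    by (intro integrableI_nonneg) auto
qed




definition hh :: "real \<Rightarrow> real \<Rightarrow> real" where
  "hh a b = min a b * sqrt (min a b) * max a b - 1/5 * (min a b)^2 * sqrt (min a b)"

definition pp :: "real \<Rightarrow> real \<Rightarrow> real" where
  "pp a u = max 0 (a - u^2)"

lemma hh_sym: "hh a b = hh b a"
  unfolding hh_def by (simp add: min.commute max.commute)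

lemma powr52: "(x::real) \<ge> 0 \<Longrightarrow> x powr (5/2) = x^2 * sqrt x"
proof (cases "x = 0")
  case False
  assume x: "x \<ge> 0"
  have "x powr (5/2) = x powr (2 + 1/2)" by simp
  also have "\<dots> = x powr 2 * x powr (1/2)" by (rule powr_add)
  also have "\<dots> = x^2 * sqrt x" using x False by (simp add: powr_half_sqrt)
  finally show ?thesis .
qed simp

lemma integrand_eq_aux:
  fixes a b :: real assumes a: "a \<ge> 0" and b: "b \<ge> 0" and ab: "a \<le> b"
  shows "min (a powr (3/2)) (b powr (3/2)) * max (a powr (3/2)) (b powr (3/2)) powr (2/3)
       - 1/5 * min (a powr (3/2)) (b powr (3/2)) powr (5/3) = hh a b"
proof -
  have le: "a powr (3/2) \<le> b powr (3/2)" using a ab by (intro powr_mono2) auto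
  have m: "min (a powr (3/2)) (b powr (3/2)) = a powr (3/2)" using le by simp
  have M: "max (a powr (3/2)) (b powr (3/2)) = b powr (3/2)" using le by simp
  have e1: "(b powr (3/2)) powr (2/3) = b" using b by (simp add: powr_powr)
  have e2: "(a powr (3/2)) powr (5/3) = a powr (5/2)" using a by (simp add: powr_powr)
  show ?thesis unfolding m M e1 e2 hh_def using a b ab
    by (simp add: powr32 powr52 min_def max_def)
qed

lemma integrand_eq:
  fixes a b :: real assumes a: "a \<ge> 0" and b: "b \<ge> 0"
  shows "min (a powr (3/2)) (b powr (3/2)) * max (a powr (3/2)) (b powr (3/2)) powr (2/3)
       - 1/5 * min (a powr (3/2)) (b powr (3/2)) powr (5/3) = hh a b"
proof (cases "a \<le> b")
  case True then show ?thesis using integrand_eq_aux[OF a b] by simp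
next
  case False then show ?thesis using integrand_eq_aux[OF b a] hh_sym[of a b]
    by (simp add: min.commute max.commute)
qed

lemma hh_nonneg: "a \<ge> 0 \<Longrightarrow> b \<ge> 0 \<Longrightarrow> hh a b \<ge> 0"
proof -
  assume a: "a \<ge> 0" and b: "b \<ge> 0"
  define m where "m = min a b"
  have m: "m \<ge> 0" "m \<le> max a b" using a b by (auto simp: m_def)
  have "1/5 * m^2 * sqrt m \<le> m * sqrt m * max a b"
  proof -
    have "m^2 * sqrt m = m * sqrt m * m" by (simp add: power2_eq_square)
    also have "\<dots> \<le> m * sqrt m * max a b" using m by (intro mult_left_mono) auto
    finally have "m^2 * sqrt m \<le> m * sqrt m * max a b" .
    moreover have "0 \<le> m * sqrt m * max a b" using m by simp
    ultimately show ?thesis by linarith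
  qed
  then show ?thesis unfolding hh_def m_def[symmetric] by simp
qed

lemma hh_le: "a \<ge> 0 \<Longrightarrow> b \<ge> 0 \<Longrightarrow> hh a b \<le> a * sqrt a * b + b * sqrt b * a"
proof -
  assume a: "a \<ge> 0" and b: "b \<ge> 0"
  have "hh a b \<le> min a b * sqrt (min a b) * max a b" unfolding hh_def using a b by simp
  also have "\<dots> \<le> a * sqrt a * b + b * sqrt b * a"
    using a b by (cases "a \<le> b") (auto simp: min_def max_def)
  finally show ?thesis .
qed

lemma layer_aux:
  fixes a b :: real assumes a: "a \<ge> 0" and b: "b \<ge> 0" and ab: "a \<le> b"
  shows "(\<integral>\<^sup>+u. ennreal (pp a u * pp b u) \<partial>lborel) = ennreal (4/3 * hh a b)"
proof -
  define r where "r = sqrt a"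
  have r: "r \<ge> 0" "r^2 = a" using a by (auto simp: r_def)
  define F where "F = (\<lambda>u::real. a*b*u - (a+b)*u^3/3 + u^5/5)"
  define f where "f = (\<lambda>u::real. (a - u^2) * (b - u^2))"
  have "(f has_integral (F r - F (-r))) {-r..r}"
  proof (rule fundamental_theorem_of_calculus)
    show "-r \<le> r" using r by simp
    fix x assume "x \<in> {-r..r}"
    have "(F has_real_derivative (a*b - (a+b)*x^2 + x^4)) (at x within {-r..r})"
      unfolding F_def by (auto intro!: derivative_eq_intros simp: field_simps)
    moreover have "a*b - (a+b)*x^2 + x^4 = f x" unfolding f_def by (simp add: algebra_simps eval_nat_numeral)
    ultimately have "(F has_real_derivative f x) (at x within {-r..r})" by simp
    then show "(F has_vector_derivative f x) (at x within {-r..r})"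
      by (simp add: has_real_derivative_iff_has_vector_derivative)
  qed
  moreover have nn: "\<And>u. u \<in> {-r..r} \<Longrightarrow> 0 \<le> f u"
  proof -
    fix u assume "u \<in> {-r..r}"
    then have "\<bar>u\<bar> \<le> r" by auto
    then have "\<bar>u\<bar>^2 \<le> r^2" by (intro power_mono) auto
    then have "u^2 \<le> r^2" by simp
    then show "0 \<le> f u" using r ab unfolding f_def by simp
  qed
  ultimately have I: "integral\<^sup>N lborel (\<lambda>u. indicator {-r..r} u * f u) = ennreal (F r - F (-r))"
    by (intro nn_integral_has_integral_lebesgue) auto
  have eq: "ennreal (pp a u * pp b u) = ennreal (indicator {-r..r} u * f u)" for u
  proof (cases "u \<in> {-r..r}")
    case True
    then have "\<bar>u\<bar> \<le> r" by auto
    then have "\<bar>u\<bar>^2 \<le> r^2" by (intro power_mono) auto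
    then have "u^2 \<le> r^2" by simp
    then show ?thesis using True r ab by (simp add: pp_def f_def)
  next
    case False
    then have "\<bar>u\<bar> > r" by auto
    then have "r^2 < \<bar>u\<bar>^2" using r by (intro power_strict_mono) auto
    then have "u^2 > r^2" by simp
    then show ?thesis using False r by (simp add: pp_def f_def)
  qed
  have val: "F r - F (-r) = 4/3 * hh a b"
  proof -
    have r3: "r^3 = a * r"
    proof - have "r^3 = r^2 * r" by (simp add: power2_eq_square power3_eq_cube) then show ?thesis using r by simp qed
    have r5: "r^5 = a^2 * r"
    proof - have "r^5 = (r^2)^2 * r" by (simp add: power2_eq_square eval_nat_numeral) then show ?thesis using r by simp qed
    have hv: "hh a b = a * r * b - 1/5 * a^2 * r"
    proof -
      have "min a b = a" "max a b = b" using ab by auto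
      then show ?thesis unfolding hh_def r_def by simp
    qed
    have "F r - F (-r) = 2 * (a*b*r - (a+b)*r^3/3 + r^5/5)" by (simp add: F_def)
    also have "\<dots> = 4/3 * (a * r * b - 1/5 * a^2 * r)" unfolding r3 r5 by (simp add: field_simps power2_eq_square)
    also have "\<dots> = 4/3 * hh a b" unfolding hv ..
    finally show ?thesis .
  qed
  have "(\<integral>\<^sup>+u. ennreal (pp a u * pp b u) \<partial>lborel) = (\<integral>\<^sup>+u. ennreal (indicator {-r..r} u * f u) \<partial>lborel)"
    by (intro nn_integral_cong) (rule eq)
  also have "\<dots> = ennreal (F r - F (-r))" using I by simp
  also have "\<dots> = ennreal (4/3 * hh a b)" by (simp only: val)
  finally show ?thesis .
qed

lemma layer:
  fixes a b :: real assumes a: "a \<ge> 0" and b: "b \<ge> 0"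
  shows "(\<integral>\<^sup>+u. ennreal (pp a u * pp b u) \<partial>lborel) = ennreal (4/3 * hh a b)"
proof (cases "a \<le> b")
  case True then show ?thesis by (rule layer_aux[OF a b])
next
  case False then show ?thesis using layer_aux[OF b a] hh_sym[of a b] by (simp add: mult.commute)
qed

lemma pp_convex:
  fixes s :: real assumes "0 \<le> s" "s \<le> 1"
  shows "pp (s*a + (1-s)*b) u \<le> s * pp a u + (1-s) * pp b u"
proof -
  have "s*a + (1-s)*b - u^2 = s*(a - u^2) + (1-s)*(b-u^2)" by (simp add: algebra_simps)
  also have "\<dots> \<le> s * pp a u + (1-s) * pp b u"
    using assms by (intro add_mono mult_left_mono) (auto simp: pp_def)
  finally show ?thesis using assms by (simp add: pp_def)
qed

lemma pp_nonneg: "pp a u \<ge> 0" by (simp add: pp_def)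




definition GN :: "(real^3 \<Rightarrow> real) \<Rightarrow> real \<Rightarrow> ennreal" where
  "GN t u = (\<integral>\<^sup>+x. ennreal (pp (t x) u) \<partial>lborel)"

definition DN :: "(real^3 \<Rightarrow> real) \<Rightarrow> ennreal" where
  "DN t = (\<integral>\<^sup>+p. ennreal (hh (t (fst p)) (t (snd p))) \<partial>(lborel \<Otimes>\<^sub>M lborel))"

lemma pp_measurable'[measurable (raw)]:
  assumes [measurable]: "f \<in> borel_measurable M" "g \<in> borel_measurable M"
  shows "(\<lambda>x. pp (f x) (g x)) \<in> borel_measurable M"
  unfolding pp_def by measurable

lemma hh_measurable'[measurable (raw)]:
  assumes [measurable]: "f \<in> borel_measurable M" "g \<in> borel_measurable M"
  shows "(\<lambda>x. hh (f x) (g x)) \<in> borel_measurable M"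
  unfolding hh_def by measurable

lemma DN_repr:
  fixes t :: "real^3 \<Rightarrow> real"
  assumes tm[measurable]: "t \<in> borel_measurable lborel" and t0: "\<And>x. t x \<ge> 0"
  shows "DN t = ennreal (3/4) * (\<integral>\<^sup>+u. GN t u * GN t u \<partial>lborel)"
proof -
  have hhrep: "ennreal (hh (t x) (t y)) = ennreal (3/4) * (\<integral>\<^sup>+u. ennreal (pp (t x) u) * ennreal (pp (t y) u) \<partial>lborel)" for x y
  proof -
    have "(\<integral>\<^sup>+u. ennreal (pp (t x) u) * ennreal (pp (t y) u) \<partial>lborel) = ennreal (4/3 * hh (t x) (t y))"
      using layer[OF t0 t0, of x y] by (simp add: ennreal_mult pp_nonneg)
    then show ?thesis using hh_nonneg[OF t0 t0, of x y] by (simp add: ennreal_mult[symmetric])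
  qed
  have "DN t = (\<integral>\<^sup>+x. \<integral>\<^sup>+y. ennreal (hh (t x) (t y)) \<partial>lborel \<partial>lborel)"
    unfolding DN_def by (subst lborel.nn_integral_fst[symmetric]) auto
  also have "\<dots> = (\<integral>\<^sup>+x. \<integral>\<^sup>+y. ennreal (3/4) * (\<integral>\<^sup>+u. ennreal (pp (t x) u) * ennreal (pp (t y) u) \<partial>lborel) \<partial>lborel \<partial>lborel)"
    by (simp only: hhrep)
  also have "\<dots> = (\<integral>\<^sup>+x. ennreal (3/4) * (\<integral>\<^sup>+y. (\<integral>\<^sup>+u. ennreal (pp (t x) u) * ennreal (pp (t y) u) \<partial>lborel) \<partial>lborel) \<partial>lborel)"
    by (intro nn_integral_cong nn_integral_cmult) measurable
  also have "\<dots> = ennreal (3/4) * (\<integral>\<^sup>+x. (\<integral>\<^sup>+y. (\<integral>\<^sup>+u. ennreal (pp (t x) u) * ennreal (pp (t y) u) \<partial>lborel) \<partial>lborel) \<partial>lborel)"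
    by (intro nn_integral_cmult) measurable
  also have "(\<integral>\<^sup>+x. (\<integral>\<^sup>+y. (\<integral>\<^sup>+u. ennreal (pp (t x) u) * ennreal (pp (t y) u) \<partial>lborel) \<partial>lborel) \<partial>lborel)
      = (\<integral>\<^sup>+x. (\<integral>\<^sup>+u. ennreal (pp (t x) u) * GN t u \<partial>lborel) \<partial>lborel)"
  proof (intro nn_integral_cong)
    fix x :: "real^3"
    have "(\<integral>\<^sup>+y. (\<integral>\<^sup>+u. ennreal (pp (t x) u) * ennreal (pp (t y) u) \<partial>lborel) \<partial>lborel)
        = (\<integral>\<^sup>+u. (\<integral>\<^sup>+y. ennreal (pp (t x) u) * ennreal (pp (t y) u) \<partial>lborel) \<partial>lborel)"
      by (rule lborel_pair.Fubini') measurable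
    also have "\<dots> = (\<integral>\<^sup>+u. ennreal (pp (t x) u) * GN t u \<partial>lborel)"
      unfolding GN_def by (intro nn_integral_cong nn_integral_cmult) measurable
    finally show "(\<integral>\<^sup>+y. (\<integral>\<^sup>+u. ennreal (pp (t x) u) * ennreal (pp (t y) u) \<partial>lborel) \<partial>lborel)
        = (\<integral>\<^sup>+u. ennreal (pp (t x) u) * GN t u \<partial>lborel)" .
  qed
  also have "\<dots> = (\<integral>\<^sup>+u. (\<integral>\<^sup>+x. ennreal (pp (t x) u) * GN t u \<partial>lborel) \<partial>lborel)"
    unfolding GN_def by (rule lborel_pair.Fubini'[symmetric]) measurable
  also have "\<dots> = (\<integral>\<^sup>+u. GN t u * GN t u \<partial>lborel)"
    unfolding GN_def by (intro nn_integral_cong nn_integral_multc) measurable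
  finally show ?thesis .
qed




lemma sq_convex_real:
  fixes a b s :: real assumes "0 \<le> s" "s \<le> 1"
  shows "(s*a + (1-s)*b) * (s*a + (1-s)*b) \<le> s * (a*a) + (1-s) * (b*b)"
proof -
  have "s * (a*a) + (1-s) * (b*b) - (s*a + (1-s)*b) * (s*a + (1-s)*b) = s*(1-s)*((a-b)*(a-b))"
    by (simp add: algebra_simps)
  moreover have "s*(1-s)*((a-b)*(a-b)) \<ge> 0" using assms by simp
  ultimately show ?thesis by linarith
qed

lemma sq_convex_ennreal:
  fixes X A B :: ennreal and s :: real
  assumes s: "0 < s" "s < 1" and X: "X \<le> ennreal s * A + ennreal (1-s) * B"
  shows "X * X \<le> ennreal s * (A*A) + ennreal (1-s) * (B*B)"
proof -
  have "X * X \<le> (ennreal s * A + ennreal (1-s) * B) * (ennreal s * A + ennreal (1-s) * B)"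
    using X by (intro mult_mono) auto
  also have "\<dots> \<le> ennreal s * (A*A) + ennreal (1-s) * (B*B)"
  proof (cases "A = \<infinity> \<or> B = \<infinity>")
    case True
    then show ?thesis using s by (auto simp: ennreal_mult_top ennreal_top_mult)
  next
    case False
    then obtain a b where ab: "A = ennreal a" "B = ennreal b" "a \<ge> 0" "b \<ge> 0"
      by (cases A; cases B) auto
    have "(ennreal s * A + ennreal (1-s) * B) * (ennreal s * A + ennreal (1-s) * B)
        = ennreal ((s*a + (1-s)*b) * (s*a + (1-s)*b))"
      using s ab by (simp add: ennreal_mult[symmetric] ennreal_plus[symmetric] del: ennreal_plus)
    also have "\<dots> \<le> ennreal (s * (a*a) + (1-s) * (b*b))"
      using sq_convex_real[of s a b] s by (intro ennreal_leI) auto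
    also have "\<dots> = ennreal s * (A*A) + ennreal (1-s) * (B*B)"
      using s ab by (simp add: ennreal_mult[symmetric] ennreal_plus[symmetric] del: ennreal_plus)
    finally show ?thesis .
  qed
  finally show ?thesis .
qed

lemma GN_measurable[measurable]:
  assumes [measurable]: "t \<in> borel_measurable lborel"
  shows "GN t \<in> borel_measurable lborel"
  unfolding GN_def by measurable

lemma GN_convex:
  fixes t1 t2 :: "real^3 \<Rightarrow> real"
  assumes [measurable]: "t1 \<in> borel_measurable lborel" "t2 \<in> borel_measurable lborel"
    and s: "0 < s" "s < 1"
  shows "GN (\<lambda>x. s * t1 x + (1-s) * t2 x) u \<le> ennreal s * GN t1 u + ennreal (1-s) * GN t2 u"
proof -
  have "GN (\<lambda>x. s * t1 x + (1-s) * t2 x) u \<le> (\<integral>\<^sup>+x. ennreal s * ennreal (pp (t1 x) u) + ennreal (1-s) * ennreal (pp (t2 x) u) \<partial>lborel)"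
    unfolding GN_def
  proof (intro nn_integral_mono)
    fix x
    have "ennreal (pp (s * t1 x + (1-s) * t2 x) u) \<le> ennreal (s * pp (t1 x) u + (1-s) * pp (t2 x) u)"
      using pp_convex[of s "t1 x" "t2 x" u] s by (intro ennreal_leI) auto
    also have "\<dots> = ennreal s * ennreal (pp (t1 x) u) + ennreal (1-s) * ennreal (pp (t2 x) u)"
      using s by (simp add: ennreal_mult[symmetric] ennreal_plus[symmetric] pp_nonneg del: ennreal_plus)
    finally show "ennreal (pp (s * t1 x + (1-s) * t2 x) u) \<le> ennreal s * ennreal (pp (t1 x) u) + ennreal (1-s) * ennreal (pp (t2 x) u)" .
  qed
  also have "\<dots> = ennreal s * GN t1 u + ennreal (1-s) * GN t2 u"
    unfolding GN_def by (simp add: nn_integral_add nn_integral_cmult)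
  finally show ?thesis .
qed

lemma DN_convex:
  fixes t1 t2 :: "real^3 \<Rightarrow> real"
  assumes [measurable]: "t1 \<in> borel_measurable lborel" "t2 \<in> borel_measurable lborel"
    and t1: "\<And>x. t1 x \<ge> 0" and t2: "\<And>x. t2 x \<ge> 0"
    and s: "0 < s" "s < 1"
  shows "DN (\<lambda>x. s * t1 x + (1-s) * t2 x) \<le> ennreal s * DN t1 + ennreal (1-s) * DN t2"
proof -
  let ?t = "\<lambda>x. s * t1 x + (1-s) * t2 x"
  have tm[measurable]: "?t \<in> borel_measurable lborel" by measurable
  have t0: "?t x \<ge> 0" for x using t1[of x] t2[of x] s by simp
  have "DN ?t = ennreal (3/4) * (\<integral>\<^sup>+u. GN ?t u * GN ?t u \<partial>lborel)"
    by (rule DN_repr[OF tm t0])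
  also have "\<dots> \<le> ennreal (3/4) * (\<integral>\<^sup>+u. ennreal s * (GN t1 u * GN t1 u) + ennreal (1-s) * (GN t2 u * GN t2 u) \<partial>lborel)"
    by (intro mult_left_mono nn_integral_mono sq_convex_ennreal[OF s] GN_convex[OF assms(1,2) s]) auto
  also have "\<dots> = ennreal s * (ennreal (3/4) * (\<integral>\<^sup>+u. GN t1 u * GN t1 u \<partial>lborel))
      + ennreal (1-s) * (ennreal (3/4) * (\<integral>\<^sup>+u. GN t2 u * GN t2 u \<partial>lborel))"
  proof -
    have "(\<integral>\<^sup>+u. ennreal s * (GN t1 u * GN t1 u) + ennreal (1-s) * (GN t2 u * GN t2 u) \<partial>lborel)
        = (\<integral>\<^sup>+u. ennreal s * (GN t1 u * GN t1 u) \<partial>lborel) + (\<integral>\<^sup>+u. ennreal (1-s) * (GN t2 u * GN t2 u) \<partial>lborel)"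
      by (rule nn_integral_add) measurable
    also have "\<dots> = ennreal s * (\<integral>\<^sup>+u. GN t1 u * GN t1 u \<partial>lborel) + ennreal (1-s) * (\<integral>\<^sup>+u. GN t2 u * GN t2 u \<partial>lborel)"
      by (subst nn_integral_cmult, measurable)+
    finally show ?thesis by (simp only: distrib_left ac_simps)
  qed
  also have "\<dots> = ennreal s * DN t1 + ennreal (1-s) * DN t2"
    using DN_repr[OF assms(1) t1] DN_repr[OF assms(2) t2] by simp
  finally show ?thesis .
qed




lemma t_le_bound:
  fixes t n :: real assumes t: "t \<ge> 0" and n: "n \<ge> 0"
  shows "t \<le> (1 + n) * (t * sqrt t) + 1 / (1 + n)^2"
proof (cases "t \<le> 1 / (1 + n)^2")
  case True
  have "0 \<le> (1 + n) * (t * sqrt t)" using t n by simp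
  then show ?thesis using True by linarith
next
  case False
  then have "1 / (1 + n)^2 < t" by simp
  then have "sqrt (1 / (1 + n)^2) < sqrt t" by (rule real_sqrt_less_mono)
  moreover have "sqrt (1 / (1 + n)^2) = 1 / (1 + n)" using n by (simp add: real_sqrt_divide)
  ultimately have "1 / (1 + n) < sqrt t" by simp
  then have "1 < (1 + n) * sqrt t" using n by (simp add: field_simps)
  then have "t * 1 \<le> t * ((1 + n) * sqrt t)" using t by (intro mult_left_mono) auto
  then have h: "t \<le> (1 + n) * (t * sqrt t)" by (simp add: ac_simps)
  moreover have "0 \<le> 1 / (1 + n)^2" using n by simp
  ultimately show ?thesis by linarith
qed

locale adm =
  fixes t :: "real^3 \<Rightarrow> real"
  assumes tm[measurable]: "t \<in> borel_measurable lborel"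
    and t0: "\<And>x. t x \<ge> 0"
    and tint: "integrable lborel (\<lambda>\<xi>. (1 + (norm \<xi>)^2) * (t \<xi> * sqrt (t \<xi>)))"
begin

lemma int32: "integrable lborel (\<lambda>\<xi>. t \<xi> * sqrt (t \<xi>))"
proof (rule Bochner_Integration.integrable_bound[OF tint])
  show "AE x in lborel. norm (t x * sqrt (t x)) \<le> norm ((1 + (norm x)^2) * (t x * sqrt (t x)))"
  proof (intro AE_I2)
    fix x
    have a: "0 \<le> t x * sqrt (t x)" using t0[of x] by simp
    have "t x * sqrt (t x) \<le> (1 + (norm x)^2) * (t x * sqrt (t x))"
      using mult_right_mono[OF _ a, of 1 "1 + (norm x)^2"] by simp
    then show "norm (t x * sqrt (t x)) \<le> norm ((1 + (norm x)^2) * (t x * sqrt (t x)))" using a by simp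
  qed
qed simp

lemma intA: "integrable lborel (\<lambda>\<xi>. (norm \<xi>)^2 * (t \<xi> * sqrt (t \<xi>)))"
proof (rule Bochner_Integration.integrable_bound[OF tint])
  show "AE x in lborel. norm ((norm x)^2 * (t x * sqrt (t x))) \<le> norm ((1 + (norm x)^2) * (t x * sqrt (t x)))"
  proof (intro AE_I2)
    fix x
    have a: "0 \<le> t x * sqrt (t x)" using t0[of x] by simp
    have "(norm x)^2 * (t x * sqrt (t x)) \<le> (1 + (norm x)^2) * (t x * sqrt (t x))"
      using mult_right_mono[OF _ a, of "(norm x)^2" "1 + (norm x)^2"] by simp
    then show "norm ((norm x)^2 * (t x * sqrt (t x))) \<le> norm ((1 + (norm x)^2) * (t x * sqrt (t x)))" using a by simp
  qed
qed simp

lemma int1: "integrable lborel t"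
proof (rule Bochner_Integration.integrable_bound)
  show "integrable lborel (\<lambda>\<xi>. (1 + (norm \<xi>)^2) * (t \<xi> * sqrt (t \<xi>)) + 1 / (1 + (norm \<xi>)^2)^2)"
    using tint w_integrable by (rule Bochner_Integration.integrable_add)
  show "AE x in lborel. norm (t x) \<le> norm ((1 + (norm x)^2) * (t x * sqrt (t x)) + 1 / (1 + (norm x)^2)^2)"
  proof (intro AE_I2)
    fix x
    have "t x \<le> (1 + (norm x)^2) * (t x * sqrt (t x)) + 1 / (1 + (norm x)^2)^2"
      by (rule t_le_bound[OF t0]) simp
    then show "norm (t x) \<le> norm ((1 + (norm x)^2) * (t x * sqrt (t x)) + 1 / (1 + (norm x)^2)^2)"
      using t0[of x] by simp
  qed
qed simp

lemma nn_fin1: "(\<integral>\<^sup>+x. ennreal (t x) \<partial>lborel) < \<infinity>"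
  using int1 t0 by (simp add: integrable_iff_bounded)

lemma nn_fin32: "(\<integral>\<^sup>+x. ennreal (t x * sqrt (t x)) \<partial>lborel) < \<infinity>"
  using int32 t0 by (simp add: integrable_iff_bounded)

lemma prod_nn:
  fixes f g :: "real^3 \<Rightarrow> real"
  assumes [measurable]: "f \<in> borel_measurable lborel" "g \<in> borel_measurable lborel"
  shows "(\<integral>\<^sup>+p. ennreal (f (fst p)) * ennreal (g (snd p)) \<partial>(lborel \<Otimes>\<^sub>M lborel))
    = (\<integral>\<^sup>+x. ennreal (f x) \<partial>lborel) * (\<integral>\<^sup>+y. ennreal (g y) \<partial>lborel)"
proof -
  have "(\<integral>\<^sup>+p. ennreal (f (fst p)) * ennreal (g (snd p)) \<partial>(lborel \<Otimes>\<^sub>M lborel))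
      = (\<integral>\<^sup>+x. \<integral>\<^sup>+y. ennreal (f x) * ennreal (g y) \<partial>lborel \<partial>lborel)"
    by (subst lborel.nn_integral_fst[symmetric]) auto
  also have "\<dots> = (\<integral>\<^sup>+x. ennreal (f x) * (\<integral>\<^sup>+y. ennreal (g y) \<partial>lborel) \<partial>lborel)"
    by (intro nn_integral_cong nn_integral_cmult) measurable
  also have "\<dots> = (\<integral>\<^sup>+x. ennreal (f x) \<partial>lborel) * (\<integral>\<^sup>+y. ennreal (g y) \<partial>lborel)"
    by (rule nn_integral_multc) measurable
  finally show ?thesis .
qed

lemma DN_fin: "DN t < \<infinity>"
proof -
  let ?f = "\<lambda>x. t x * sqrt (t x)"
  have "DN t \<le> (\<integral>\<^sup>+p. ennreal (?f (fst p)) * ennreal (t (snd p)) + ennreal (t (fst p)) * ennreal (?f (snd p)) \<partial>(lborel \<Otimes>\<^sub>M lborel))"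
    unfolding DN_def
  proof (intro nn_integral_mono)
    fix p :: "(real^3) \<times> (real^3)"
    have "ennreal (hh (t (fst p)) (t (snd p))) \<le> ennreal (?f (fst p) * t (snd p) + ?f (snd p) * t (fst p))"
      by (intro ennreal_leI hh_le t0)
    also have "\<dots> = ennreal (?f (fst p)) * ennreal (t (snd p)) + ennreal (t (fst p)) * ennreal (?f (snd p))"
      using t0[of "fst p"] t0[of "snd p"]
      by (simp add: ennreal_mult[symmetric] ennreal_plus[symmetric] mult.commute del: ennreal_plus)
    finally show "ennreal (hh (t (fst p)) (t (snd p))) \<le> ennreal (?f (fst p)) * ennreal (t (snd p)) + ennreal (t (fst p)) * ennreal (?f (snd p))" .
  qed
  also have "\<dots> = (\<integral>\<^sup>+p. ennreal (?f (fst p)) * ennreal (t (snd p)) \<partial>(lborel \<Otimes>\<^sub>M lborel))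
      + (\<integral>\<^sup>+p. ennreal (t (fst p)) * ennreal (?f (snd p)) \<partial>(lborel \<Otimes>\<^sub>M lborel))"
    by (rule nn_integral_add) measurable
  also have "\<dots> = (\<integral>\<^sup>+x. ennreal (?f x) \<partial>lborel) * (\<integral>\<^sup>+y. ennreal (t y) \<partial>lborel)
      + (\<integral>\<^sup>+x. ennreal (t x) \<partial>lborel) * (\<integral>\<^sup>+y. ennreal (?f y) \<partial>lborel)"
  proof -
    have m: "(\<lambda>x. t x * sqrt (t x)) \<in> borel_measurable lborel" by measurable
    show ?thesis by (simp only: prod_nn[OF m tm] prod_nn[OF tm m])
  qed
  also have "\<dots> < \<infinity>"
    using nn_fin1 nn_fin32 by (simp add: ennreal_mult_less_top)
  finally show ?thesis .
qed

lemma Dr_eq: "(\<integral>p. hh (t (fst p)) (t (snd p)) \<partial>(lborel \<Otimes>\<^sub>M lborel)) = enn2real (DN t)"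
  unfolding DN_def by (rule integral_eq_nn_integral) (auto intro: hh_nonneg t0)

end




lemma Es_eq:
  fixes t :: "real^3 \<Rightarrow> real" assumes t0: "\<And>x. t x \<ge> 0"
  shows "E_s q Z t = (\<integral>\<xi>. (norm \<xi>)^2 * (t \<xi> * sqrt (t \<xi>)) \<partial>lborel)
     - 3/2 * gamma_q q powr (-1/2) * Z * (\<integral>\<xi>. t \<xi> \<partial>lborel)
     + 3/4 * gamma_q q powr (-1/2) * (\<integral>p. hh (t (fst p)) (t (snd p)) \<partial>(lborel \<Otimes>\<^sub>M lborel))"
proof -
  have e1: "(\<integral>\<xi>. (norm \<xi>)^2 * t \<xi> powr (3/2) \<partial>lborel) = (\<integral>\<xi>. (norm \<xi>)^2 * (t \<xi> * sqrt (t \<xi>)) \<partial>lborel)"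
    by (intro Bochner_Integration.integral_cong refl) (simp add: powr32 t0)
  have e2: "(\<integral>\<xi>. (t \<xi> powr (3/2)) powr (2/3) \<partial>lborel) = (\<integral>\<xi>. t \<xi> \<partial>lborel)"
    by (intro Bochner_Integration.integral_cong refl) (simp add: powr_powr t0)
  have e3: "(\<integral>p. (min (t (fst p) powr (3/2)) (t (snd p) powr (3/2)) * max (t (fst p) powr (3/2)) (t (snd p) powr (3/2)) powr (2/3)
              - 1/5 * min (t (fst p) powr (3/2)) (t (snd p) powr (3/2)) powr (5/3)) \<partial>(lborel \<Otimes>\<^sub>M lborel))
      = (\<integral>p. hh (t (fst p)) (t (snd p)) \<partial>(lborel \<Otimes>\<^sub>M lborel))"
    by (intro Bochner_Integration.integral_cong refl integrand_eq t0)
  show ?thesis unfolding E_s_def E_mTF_def e1 e2 e3 ..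
qed




lemma adm_of_admissible:
  assumes "admissible t" shows "adm t"
proof -
  have m: "t \<in> borel_measurable lborel" and t0: "\<And>x. t x \<ge> 0"
    and i: "integrable lborel (\<lambda>\<xi>. (1 + (norm \<xi>)^2) * \<bar>t \<xi>\<bar> powr (3/2))"
    using assms unfolding admissible_def by auto
  have eq: "(\<lambda>\<xi>. (1 + (norm \<xi>)^2) * \<bar>t \<xi>\<bar> powr (3/2)) = (\<lambda>\<xi>. (1 + (norm \<xi>)^2) * (t \<xi> * sqrt (t \<xi>)))"
    by (rule ext) (simp add: t0 powr32)
  have "integrable lborel (\<lambda>\<xi>. (1 + (norm \<xi>)^2) * (t \<xi> * sqrt (t \<xi>)))"
    using i unfolding eq .
  then show ?thesis using m t0 by unfold_locales auto
qed

lemma alg: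
  fixes s a1 a2 b1 b2 d1 d2 c e Z :: real
  shows "(s*a1+(1-s)*a2) - c*Z*(s*b1+(1-s)*b2) + e*(s*d1+(1-s)*d2)
     = s*(a1 - c*Z*b1 + e*d1) + (1-s)*(a2 - c*Z*b2 + e*d2)"
  by (simp add: algebra_simps)

theorem lemma3:
  fixes q :: nat and Z :: real and t1 t2 :: "real^3 \<Rightarrow> real" and s :: real
  assumes "q > 0" and "Z > 0"
    and "admissible t1" and "admissible t2"
    and "\<not> (AE \<xi> in lborel. t1 \<xi> = t2 \<xi>)"
    and "0 < s" and "s < 1"
  shows "admissible (\<lambda>\<xi>. s * t1 \<xi> + (1 - s) * t2 \<xi>)
    \<and> E_s q Z (\<lambda>\<xi>. s * t1 \<xi> + (1 - s) * t2 \<xi>) < s * E_s q Z t1 + (1 - s) * E_s q Z t2"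
proof -
  have a1: "adm t1" by (rule adm_of_admissible) fact
  have a2: "adm t2" by (rule adm_of_admissible) fact
  note [measurable] = adm.tm[OF a1] adm.tm[OF a2]
  note s = \<open>0 < s\<close> \<open>s < 1\<close>
  define tc where "tc = (\<lambda>\<xi>. s * t1 \<xi> + (1 - s) * t2 \<xi>)"
  have tcm[measurable]: "tc \<in> borel_measurable lborel" unfolding tc_def by measurable
  have tc0: "tc x \<ge> 0" for x using adm.t0[OF a1, of x] adm.t0[OF a2, of x] s by (simp add: tc_def)
  have conv: "tc x * sqrt (tc x) \<le> s * (t1 x * sqrt (t1 x)) + (1-s) * (t2 x * sqrt (t2 x))" for x
    unfolding tc_def by (rule conv32(1)[OF adm.t0[OF a1] adm.t0[OF a2] s])
  have tcint: "integrable lborel (\<lambda>\<xi>. (1 + (norm \<xi>)^2) * (tc \<xi> * sqrt (tc \<xi>)))"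
  proof (rule Bochner_Integration.integrable_bound)
    show "integrable lborel (\<lambda>\<xi>. s * ((1 + (norm \<xi>)^2) * (t1 \<xi> * sqrt (t1 \<xi>))) + (1-s) * ((1 + (norm \<xi>)^2) * (t2 \<xi> * sqrt (t2 \<xi>))))"
      using adm.tint[OF a1] adm.tint[OF a2] by auto
    show "AE x in lborel. norm ((1 + (norm x)^2) * (tc x * sqrt (tc x)))
        \<le> norm (s * ((1 + (norm x)^2) * (t1 x * sqrt (t1 x))) + (1-s) * ((1 + (norm x)^2) * (t2 x * sqrt (t2 x))))"
    proof (intro AE_I2)
      fix x :: "real^3"
      have p: "0 \<le> (1 + (norm x)^2)" by simp
      have a: "0 \<le> tc x * sqrt (tc x)" using tc0[of x] by simp
      have "(1 + (norm x)^2) * (tc x * sqrt (tc x)) \<le> (1 + (norm x)^2) * (s * (t1 x * sqrt (t1 x)) + (1-s) * (t2 x * sqrt (t2 x)))"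
        by (rule mult_left_mono[OF conv p])
      also have "\<dots> = s * ((1 + (norm x)^2) * (t1 x * sqrt (t1 x))) + (1-s) * ((1 + (norm x)^2) * (t2 x * sqrt (t2 x)))"
        by (simp add: algebra_simps)
      finally have le: "(1 + (norm x)^2) * (tc x * sqrt (tc x)) \<le> s * ((1 + (norm x)^2) * (t1 x * sqrt (t1 x))) + (1-s) * ((1 + (norm x)^2) * (t2 x * sqrt (t2 x)))" .
      have L0: "0 \<le> (1 + (norm x)^2) * (tc x * sqrt (tc x))" using a p by simp
      show "norm ((1 + (norm x)^2) * (tc x * sqrt (tc x)))
        \<le> norm (s * ((1 + (norm x)^2) * (t1 x * sqrt (t1 x))) + (1-s) * ((1 + (norm x)^2) * (t2 x * sqrt (t2 x))))"
        unfolding real_norm_def using le L0 by linarith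
    qed
  qed simp
  have ac: "adm tc" using tcm tc0 tcint by unfold_locales auto
  have admc: "admissible tc"
  proof -
    have eq: "(\<lambda>\<xi>. (1 + (norm \<xi>)^2) * \<bar>tc \<xi>\<bar> powr (3/2)) = (\<lambda>\<xi>. (1 + (norm \<xi>)^2) * (tc \<xi> * sqrt (tc \<xi>)))"
      by (rule ext) (simp add: tc0 powr32)
    show ?thesis unfolding admissible_def eq using tcm tc0 tcint by auto
  qed

  let ?a = "\<lambda>t \<xi>. (norm \<xi>)^2 * (t \<xi> * sqrt (t \<xi>))"
  have Astrict: "(\<integral>\<xi>. ?a tc \<xi> \<partial>lborel) < s * (\<integral>\<xi>. ?a t1 \<xi> \<partial>lborel) + (1-s) * (\<integral>\<xi>. ?a t2 \<xi> \<partial>lborel)"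
  proof -
    define d where "d = (\<lambda>\<xi>. s * ?a t1 \<xi> + (1-s) * ?a t2 \<xi> - ?a tc \<xi>)"
    have dint: "integrable lborel d" unfolding d_def using adm.intA[OF a1] adm.intA[OF a2] adm.intA[OF ac] by auto
    have d0: "0 \<le> d x" for x
    proof -
      have "(norm x)^2 * (tc x * sqrt (tc x)) \<le> (norm x)^2 * (s * (t1 x * sqrt (t1 x)) + (1-s) * (t2 x * sqrt (t2 x)))"
        by (rule mult_left_mono[OF conv]) simp
      then show ?thesis unfolding d_def by (simp add: algebra_simps)
    qed
    have dpos: "0 < d x" if "t1 x \<noteq> t2 x" "x \<noteq> 0" for x
    proof -
      have "tc x * sqrt (tc x) < s * (t1 x * sqrt (t1 x)) + (1-s) * (t2 x * sqrt (t2 x))"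
        unfolding tc_def by (rule conv32(2)[OF adm.t0[OF a1] adm.t0[OF a2] s that(1)])
      then have "(norm x)^2 * (tc x * sqrt (tc x)) < (norm x)^2 * (s * (t1 x * sqrt (t1 x)) + (1-s) * (t2 x * sqrt (t2 x)))"
        using that(2) by (intro mult_strict_left_mono) auto
      then show ?thesis unfolding d_def by (simp add: algebra_simps)
    qed
    have "(\<integral>x. d x \<partial>lborel) \<noteq> 0"
    proof
      assume "(\<integral>x. d x \<partial>lborel) = 0"
      then have "AE x in lborel. d x = 0"
        using integral_nonneg_eq_0_iff_AE[OF dint] d0 by auto
      then have "AE x in lborel. t1 x = t2 x"
        using AE_lborel_singleton[of "0::real^3"]
        by eventually_elim (use dpos in force)
      then show False using assms(5) by simp
    qed
    moreover have "(\<integral>x. d x \<partial>lborel) \<ge> 0" using d0 by simp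
    ultimately have "(\<integral>x. d x \<partial>lborel) > 0" by simp
    moreover have "(\<integral>x. d x \<partial>lborel) = s * (\<integral>\<xi>. ?a t1 \<xi> \<partial>lborel) + (1-s) * (\<integral>\<xi>. ?a t2 \<xi> \<partial>lborel) - (\<integral>\<xi>. ?a tc \<xi> \<partial>lborel)"
      unfolding d_def using adm.intA[OF a1] adm.intA[OF a2] adm.intA[OF ac] by simp
    ultimately show ?thesis by simp
  qed

  have Blin: "(\<integral>\<xi>. tc \<xi> \<partial>lborel) = s * (\<integral>\<xi>. t1 \<xi> \<partial>lborel) + (1-s) * (\<integral>\<xi>. t2 \<xi> \<partial>lborel)"
    unfolding tc_def using adm.int1[OF a1] adm.int1[OF a2] by simp

  let ?D = "\<lambda>t. (\<integral>p. hh (t (fst p)) (t (snd p)) \<partial>(lborel \<Otimes>\<^sub>M lborel))"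
  have Dconv: "?D tc \<le> s * ?D t1 + (1-s) * ?D t2"
  proof -
    have "DN tc \<le> ennreal s * DN t1 + ennreal (1-s) * DN t2"
      unfolding tc_def by (rule DN_convex[OF adm.tm[OF a1] adm.tm[OF a2] adm.t0[OF a1] adm.t0[OF a2] s])
    moreover have "ennreal s * DN t1 + ennreal (1-s) * DN t2 = ennreal (s * enn2real (DN t1) + (1-s) * enn2real (DN t2))"
    proof -
      have f1: "DN t1 = ennreal (enn2real (DN t1))" using adm.DN_fin[OF a1] by (simp add: ennreal_enn2real_if)
      have f2: "DN t2 = ennreal (enn2real (DN t2))" using adm.DN_fin[OF a2] by (simp add: ennreal_enn2real_if)
      show ?thesis using s
        by (subst f1, subst f2) (simp add: ennreal_mult[symmetric] ennreal_plus[symmetric] del: ennreal_plus)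
    qed
    ultimately have "DN tc \<le> ennreal (s * enn2real (DN t1) + (1-s) * enn2real (DN t2))" by simp
    then have "enn2real (DN tc) \<le> s * enn2real (DN t1) + (1-s) * enn2real (DN t2)"
    proof -
      assume le: "DN tc \<le> ennreal (s * enn2real (DN t1) + (1-s) * enn2real (DN t2))"
      have "enn2real (DN tc) \<le> enn2real (ennreal (s * enn2real (DN t1) + (1-s) * enn2real (DN t2)))"
        by (rule enn2real_mono[OF le]) simp
      also have "\<dots> = s * enn2real (DN t1) + (1-s) * enn2real (DN t2)"
        using s by (intro enn2real_ennreal add_nonneg_nonneg mult_nonneg_nonneg) auto
      finally show ?thesis .
    qed
    then show ?thesis using adm.Dr_eq[OF a1] adm.Dr_eq[OF a2] adm.Dr_eq[OF ac] by simp
  qed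

  define K where "K = gamma_q q powr (-1/2)"
  have K: "K \<ge> 0" by (simp add: K_def)
  have "E_s q Z tc = (\<integral>\<xi>. ?a tc \<xi> \<partial>lborel) - 3/2 * K * Z * (\<integral>\<xi>. tc \<xi> \<partial>lborel) + 3/4 * K * ?D tc"
    unfolding K_def by (rule Es_eq[OF tc0])
  also have "\<dots> < (s * (\<integral>\<xi>. ?a t1 \<xi> \<partial>lborel) + (1-s) * (\<integral>\<xi>. ?a t2 \<xi> \<partial>lborel))
       - 3/2 * K * Z * (s * (\<integral>\<xi>. t1 \<xi> \<partial>lborel) + (1-s) * (\<integral>\<xi>. t2 \<xi> \<partial>lborel))
       + 3/4 * K * (s * ?D t1 + (1-s) * ?D t2)"
  proof -
    have d: "3/4 * K * ?D tc \<le> 3/4 * K * (s * ?D t1 + (1-s) * ?D t2)"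
      by (rule mult_left_mono[OF Dconv]) (use K in simp)
    have b: "3/2 * K * Z * (\<integral>\<xi>. tc \<xi> \<partial>lborel) = 3/2 * K * Z * (s * (\<integral>\<xi>. t1 \<xi> \<partial>lborel) + (1-s) * (\<integral>\<xi>. t2 \<xi> \<partial>lborel))"
      by (simp only: Blin)
    show ?thesis using Astrict d b by linarith
  qed
  also have "\<dots> = s * E_s q Z t1 + (1 - s) * E_s q Z t2"
    unfolding Es_eq[OF adm.t0[OF a1]] Es_eq[OF adm.t0[OF a2]] K_def[symmetric] by (rule alg)
  finally have "E_s q Z tc < s * E_s q Z t1 + (1 - s) * E_s q Z t2" .
  with admc show ?thesis unfolding tc_def by blast
qed


end
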